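(* Let $(q_n)$ be the Fibonacci Quilt sequence. Then (1) $2q_n=q_{n+2}+q_{n-5}$ for all $n\ge7$; (2) $q_n+q_{n-2}=q_{n+1}+q_{n-5}$ for all $n\ge8$; (3) $q_n+q_{n-3}=q_{n+1}+q_{n-8}$ for all $n\ge10$.
   Context: Given an increasing sequence of positive integers $(q_i)_{i\ge1}$, an FQ-legal decomposition of an integer $m\ge0$ is an expression $m=q_{\ell_1}+q_{\ell_2}+\cdots+q_{\ell_t}$ ($t\ge0$, the empty sum representing $0$) with distinct indices $\ell_1>\ell_2>\cdots>\ell_t$ such that $|\ell_i-\ell_j|\notin\{1,3,4\}$ for all $i,j$, and $\{1,3\}\not\subset\{\ell_1,\dots,\ell_t\}$. The Fibonacci Quilt sequence is the increasing sequence of positive integers $(q_i)_{i\ge1}$ in which each $q_i$ is the smallest positive integer having no FQ-legal decomposition using only $q_1,\dots,q_{i-1}$. Its first terms are $1,2,3,4,5,7,9,12,16,21,28,37,49,\dots$. *)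

theory Defs
  imports Main
begin

definition fq_legal :: "nat set \<Rightarrow> bool" where
  "fq_legal S \<longleftrightarrow> finite S \<and> 0 \<notin> S \<and>
     (\<forall>i\<in>S. \<forall>j\<in>S. (i - j) \<notin> {1,3,4}) \<and> \<not> ({1,3} \<subseteq> S)"

definition has_fq_decomp :: "(nat \<Rightarrow> nat) \<Rightarrow> nat \<Rightarrow> nat \<Rightarrow> bool" where
  "has_fq_decomp q i m \<longleftrightarrow> (\<exists>S. S \<subseteq> {1..<i} \<and> fq_legal S \<and> (\<Sum>j\<in>S. q j) = m)"

definition is_fibonacci_quilt :: "(nat \<Rightarrow> nat) \<Rightarrow> bool" where
  "is_fibonacci_quilt q \<longleftrightarrow>
     (\<forall>i\<ge>1. q i = (LEAST m. 0 < m \<and> \<not> has_fq_decomp q i m))"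

end

theory Submission
  imports Defs
begin

fun Q :: "nat \<Rightarrow> nat" where
  "Q n = (if n \<le> 5 then n else Q (n-2) + Q (n-3))"

declare Q.simps[simp del]

lemma Q_small: "n \<le> 5 \<Longrightarrow> Q n = n"
  by (simp add: Q.simps)

lemma Q_rec: "n \<ge> 6 \<Longrightarrow> Q n = Q (n-2) + Q (n-3)"
  by (subst Q.simps) simp

lemma Q6: "Q 6 = 7" by (simp add: Q_rec Q_small)

lemma Q_suc: "Q n < Q (Suc n)"
proof (induction n rule: less_induct)
  case (less n)
  show ?case
  proof (cases "n \<le> 4")
    case True then show ?thesis by (simp add: Q_small)
  next
    case False
    show ?thesis
    proof (cases "n = 5")
      case True then show ?thesis by (simp add: Q6 Q_small)
    next
      case False
      with \<open>\<not> n \<le> 4\<close> have n6: "n \<ge> 6" by simp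
      have "Q (Suc n) = Q (n-1) + Q (n-2)" using Q_rec[of "Suc n"] n6 by simp
      moreover have "Q n = Q (n-2) + Q (n-3)" using Q_rec n6 by simp
      moreover have "Q (n-3) < Q (Suc (n-3))" using less n6 by simp
      moreover have "Q (n-2) < Q (Suc (n-2))" using less n6 by simp
      moreover have "Suc (n-3) = n-2" "Suc (n-2) = n-1" using n6 by auto
      ultimately show ?thesis by simp
    qed
  qed
qed

lemma Q_mono: "i < j \<Longrightarrow> Q i < Q j"
  using strict_mono_def lift_Suc_mono_less[of Q, OF Q_suc] by blast

lemma Q_mono_le: "i \<le> j \<Longrightarrow> Q i \<le> Q j"
  using Q_mono by (cases "i = j") (auto intro: less_imp_le)

lemma Q_rec2: "n \<ge> 7 \<Longrightarrow> Q n = Q (n-1) + Q (n-5)"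
proof (induction n rule: less_induct)
  case (less n)
  show ?case
  proof (cases "n \<le> 10")
    case True
    then have "n = 7 \<or> n = 8 \<or> n = 9 \<or> n = 10" using less.prems by auto
    then show ?thesis by (auto simp: Q_rec Q_small Q6)
  next
    case False
    have "Q n = Q (n-2) + Q (n-3)" using Q_rec False by simp
    moreover have "Q (n-2) = Q (n-3) + Q (n-7)" using less.IH[of "n-2"] False
      by (simp add: numeral_eq_Suc)
    moreover have "Q (n-3) = Q (n-4) + Q (n-8)" using less.IH[of "n-3"] False
      by (simp add: numeral_eq_Suc)
    moreover have "Q (n-1) = Q (n-3) + Q (n-4)" using Q_rec[of "n-1"] False
      by (simp add: numeral_eq_Suc)
    moreover have "Q (n-5) = Q (n-7) + Q (n-8)" using Q_rec[of "n-5"] False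
      by (simp add: numeral_eq_Suc)
    ultimately show ?thesis by simp
  qed
qed

lemma legal_subset: "fq_legal S \<Longrightarrow> T \<subseteq> S \<Longrightarrow> fq_legal T"
  unfolding fq_legal_def by (auto intro: finite_subset)

lemma legal_diff: "fq_legal S \<Longrightarrow> i \<in> S \<Longrightarrow> j \<in> S \<Longrightarrow> i - j \<notin> {1,3,4}"
  unfolding fq_legal_def by blast

lemma Q_bound: "fq_legal S \<Longrightarrow> S \<subseteq> {1..k} \<Longrightarrow> sum Q S < Q (k+3)"
proof (induction k arbitrary: S rule: less_induct)
  case (less k)
  have fin: "finite S" using less.prems unfolding fq_legal_def by blast
  show ?case
  proof (cases "k \<in> S")
    case False
    show ?thesis
    proof (cases "k = 0")
      case True then have "S = {}" using less.prems False by auto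
      then show ?thesis using \<open>k = 0\<close> by (simp add: Q_small)
    next
      case k0: False
      have "S \<subseteq> {1..k-1}"
      proof
        fix x assume "x \<in> S"
        then have "x \<in> {1..k}" "x \<noteq> k" using less.prems(2) False by auto
        then show "x \<in> {1..k-1}" by auto
      qed
      then have "sum Q S < Q (k-1+3)" using less.IH[of "k-1"] less.prems k0 by simp
      also have "\<dots> \<le> Q (k+3)" by (rule Q_mono_le) simp
      finally show ?thesis .
    qed
  next
    case True
    let ?R = "S - {k}"
    have "k - 1 \<notin> S \<or> k = 0"
      using legal_diff[OF less.prems(1) True, of "k-1"] by (cases k) auto
    moreover have "k \<noteq> 0" using True less.prems unfolding fq_legal_def by auto
    ultimately have km: "k - 1 \<notin> S" by simp
    have R: "?R \<subseteq> {1..k-2}"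
    proof
      fix x assume x: "x \<in> ?R"
      then have "x \<in> {1..k}" "x \<noteq> k" "x \<noteq> k - 1" using less.prems(2) km by auto
      then show "x \<in> {1..k-2}" by auto
    qed
    have r: "sum Q ?R < Q (k+1)"
    proof (cases "k = 1")
      case True
      have "?R \<subseteq> {1..0}" using R True by simp
      then have "?R = {}" by simp
      moreover have "0 < Q (k+1)" using True by (simp add: Q_small)
      ultimately show ?thesis by (simp only: sum.empty)
    next
      case False
      have "sum Q ?R < Q (k-2+3)"
        using less.IH[of "k-2" ?R] R legal_subset[OF less.prems(1)] \<open>k\<noteq>0\<close> by auto
      also have "k-2+3 = k+1" using \<open>k\<noteq>0\<close> False by simp
      finally show ?thesis .
    qed
    have s: "sum Q S = Q k + sum Q ?R" using fin True by (simp add: sum.remove)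
    have "Q k + Q (k+1) \<le> Q (k+3)"
    proof (cases "k \<ge> 3")
      case True then show ?thesis using Q_rec[of "k+3"] by simp
    next
      case False then have "k = 1 \<or> k = 2" using \<open>k\<noteq>0\<close> by auto
      then show ?thesis by (auto simp: Q_small Q6)
    qed
    then show ?thesis using s r by simp
  qed
qed

lemma sum_expand: "S \<subseteq> A \<Longrightarrow> finite A \<Longrightarrow> sum f S = (\<Sum>j\<in>A. if j \<in> S then f j else 0)"
  by (simp add: sum.If_cases Int_absorb1)

lemma B_small:
  assumes "fq_legal S" "S \<subseteq> {1..<n}" "1 \<le> n" "n \<le> 6"
  shows "sum Q S \<noteq> Q n"
proof -
  have sub: "S \<subseteq> {1,2,3,4,5}" using assms by auto
  have e: "sum Q S = (\<Sum>j\<in>{1,2,3,4,5}. if j \<in> S then Q j else 0)"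
    by (rule sum_expand[OF sub]) simp
  have d: "\<And>i j. i \<in> S \<Longrightarrow> j \<in> S \<Longrightarrow> i - j \<notin> {1,3,4}" using legal_diff[OF assms(1)] by blast
  have c13: "\<not> (1 \<in> S \<and> 3 \<in> S)" using assms(1) unfolding fq_legal_def by auto
  have l: "\<not>(1\<in>S \<and> 2\<in>S)" "\<not>(2\<in>S \<and> 3\<in>S)" "\<not>(3\<in>S \<and> 4\<in>S)" "\<not>(4\<in>S \<and> 5\<in>S)"
       "\<not>(1\<in>S \<and> 4\<in>S)" "\<not>(2\<in>S \<and> 5\<in>S)" "\<not>(1\<in>S \<and> 5\<in>S)"
    using d[of 2 1] d[of 3 2] d[of 4 3] d[of 5 4] d[of 4 1] d[of 5 2] d[of 5 1] by auto
  have n: "n = 1 \<or> n = 2 \<or> n = 3 \<or> n = 4 \<or> n = 5 \<or> n = 6" using assms by auto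
  have m: "\<And>j. j \<in> S \<Longrightarrow> j < n" using assms by auto
  show ?thesis
    unfolding e using n l c13 m[of 1] m[of 2] m[of 3] m[of 4] m[of 5]
    apply (cases "1 \<in> S"; cases "2 \<in> S"; cases "3 \<in> S"; cases "4 \<in> S"; cases "5 \<in> S")
    by (auto simp: Q_small Q6)
qed

lemma B: "fq_legal S \<Longrightarrow> S \<subseteq> {1..<n} \<Longrightarrow> 1 \<le> n \<Longrightarrow> sum Q S \<noteq> Q n"
proof (induction n arbitrary: S rule: less_induct)
  case (less n)
  show ?case
  proof (cases "n \<le> 6")
    case True then show ?thesis using B_small less.prems by blast
  next
    case False
    then have n7: "n \<ge> 7" by simp
    have fin: "finite S" using less.prems unfolding fq_legal_def by blast
    show ?thesis
    proof (cases "S = {}")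
      case True
      have "Q n > 0" using Q_mono[of 0 n] n7 by (simp add: Q_small)
      then show ?thesis using True by simp
    next
      case ne: False
      define k where "k = Max S"
      have kS: "k \<in> S" using fin ne k_def by simp
      have kmax: "\<And>j. j \<in> S \<Longrightarrow> j \<le> k" using fin k_def by simp
      have kn: "k < n" using kS less.prems by auto
      have s: "sum Q S = Q k + sum Q (S - {k})" using fin kS by (simp add: sum.remove)
      have Rl: "fq_legal (S - {k})" using legal_subset[OF less.prems(1)] by blast
      have dk: "\<And>j. j \<in> S - {k} \<Longrightarrow> j < k \<and> k - j \<notin> {1,3,4}"
        using kmax legal_diff[OF less.prems(1) kS] by (metis DiffE le_neq_implies_less singletonI)
      have pos: "\<And>j. j \<in> S \<Longrightarrow> j \<ge> 1" using less.prems by auto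
      consider "k \<le> n - 3" | "k = n - 2" | "k = n - 1" using kn by linarith
      then show ?thesis
      proof cases
        case 1
        have "S \<subseteq> {1..n-3}" using kmax 1 pos by force
        then have "sum Q S < Q (n-3+3)" using Q_bound less.prems by blast
        then show ?thesis using n7 by simp
      next
        case 2
        have "S - {k} \<subseteq> {1..<n-3}"
        proof
          fix j assume j: "j \<in> S - {k}"
          then have "j < k" "k - j \<noteq> 1" using dk by auto
          then show "j \<in> {1..<n-3}" using 2 pos j by auto
        qed
        then have "sum Q (S - {k}) \<noteq> Q (n-3)" using less.IH[of "n-3"] Rl n7 by simp
        moreover have "Q n = Q (n-2) + Q (n-3)" using Q_rec n7 by simp
        ultimately show ?thesis using s 2 by simp
      next
        case 3
        have Qn: "Q n = Q (n-1) + Q (n-5)" using Q_rec2 n7 by simp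
        show ?thesis
        proof (cases "n - 3 \<in> S")
          case True
          then have "n-3 \<in> S - {k}" using 3 n7 by auto
          then have "Q (n-3) \<le> sum Q (S - {k})" using fin
            by (metis finite_Diff member_le_sum zero_le)
          moreover have "Q (n-5) < Q (n-3)" using Q_mono n7 by simp
          ultimately show ?thesis using s 3 Qn by simp
        next
          case False
          have "S - {k} \<subseteq> {1..<n-5}"
          proof
            fix j assume j: "j \<in> S - {k}"
            then have "j < k" "k - j \<notin> {1,3,4}" using dk by auto
            moreover have "j \<noteq> n - 3" using False j by auto
            ultimately show "j \<in> {1..<n-5}" using 3 pos j n7 by auto
          qed
          then have "sum Q (S - {k}) \<noteq> Q (n-5)" using less.IH[of "n-5"] Rl n7 by simp
          then show ?thesis using s 3 Qn by simp
        qed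
      qed
    qed
  qed
qed

lemma A: "m < Q n \<Longrightarrow> \<exists>S. S \<subseteq> {1..<n} \<and> fq_legal S \<and> sum Q S = m"
proof (induction n arbitrary: m rule: less_induct)
  case (less n)
  show ?case
  proof (cases "m = 0")
    case True
    then show ?thesis by (intro exI[of _ "{}"]) (simp add: fq_legal_def)
  next
    case m0: False
    show ?thesis
    proof (cases "n \<le> 6")
      case True
      show ?thesis
      proof (cases "m \<le> 5")
        case m5: True
        have "Q n \<le> n \<or> n = 6" using True Q_small by fastforce
        then have "m < n" using less.prems m5 by auto
        then show ?thesis using m0 m5
          by (intro exI[of _ "{m}"]) (auto simp: fq_legal_def Q_small)
      next
        case False
        then have "n = 6" "m = 6" using True less.prems Q_small[of n] Q6 by (cases "n = 6"; auto)+
        then show ?thesis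
          by (intro exI[of _ "{2,4}"]) (auto simp: fq_legal_def Q_small)
      qed
    next
      case False
      then have n7: "n \<ge> 7" by simp
      have Qn: "Q n = Q (n-1) + Q (n-5)" using Q_rec2 n7 by simp
      show ?thesis
      proof (cases "m < Q (n-1)")
        case True
        then obtain S where "S \<subseteq> {1..<n-1}" "fq_legal S" "sum Q S = m"
          using less.IH[of "n-1"] n7 by auto
        moreover have "S \<subseteq> {1..<n}" using calculation(1) by fastforce
        ultimately show ?thesis by blast
      next
        case False
        define r where "r = m - Q (n-1)"
        have "r < Q (n-5)" using False less.prems Qn r_def by arith
        then obtain S where S: "S \<subseteq> {1..<n-5}" "fq_legal S" "sum Q S = r"
          using less.IH[of "n-5"] n7 by auto
        have fin: "finite S" using S unfolding fq_legal_def by blast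
        have notin: "n - 1 \<notin> S" using S(1) n7 by fastforce
        have leg: "fq_legal (insert (n-1) S)"
          unfolding fq_legal_def
        proof (intro conjI ballI)
          show "finite (insert (n-1) S)" using fin by simp
          show "0 \<notin> insert (n-1) S" using S n7 by auto
          show "\<not> {1,3} \<subseteq> insert (n-1) S" using S(2) n7 unfolding fq_legal_def by auto
        next
          fix i j assume i: "i \<in> insert (n-1) S" and j: "j \<in> insert (n-1) S"
          show "i - j \<notin> {1,3,4}"
          proof (cases "i \<in> S \<and> j \<in> S")
            case True then show ?thesis using legal_diff[OF S(2)] by blast
          next
            case False
            have lt: "\<And>x. x \<in> S \<Longrightarrow> x < n - 5" using S(1) by auto
            show ?thesis using False i j lt[of i] lt[of j] n7 by auto
          qed
        qed
        have "sum Q (insert (n-1) S) = m" using fin notin S r_def False by simp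
        moreover have "insert (n-1) S \<subseteq> {1..<n}"
        proof
          fix x assume "x \<in> insert (n-1) S"
          moreover have "x \<in> S \<Longrightarrow> x \<in> {1..<n-5}" using S(1) by blast
          ultimately show "x \<in> {1..<n}" using n7 by (cases "x = n-1") auto
        qed
        ultimately show ?thesis using leg by blast
      qed
    qed
  qed
qed

lemma q_eq_Q:
  assumes "is_fibonacci_quilt q"
  shows "i \<ge> 1 \<Longrightarrow> q i = Q i"
proof (induction i rule: less_induct)
  case (less i)
  have hd: "has_fq_decomp q i m = has_fq_decomp Q i m" for m
  proof -
    have "\<And>S. S \<subseteq> {1..<i} \<Longrightarrow> sum q S = sum Q S"
      by (rule sum.cong) (use less.IH in force)+
    then show ?thesis unfolding has_fq_decomp_def by metis
  qed
  have "q i = (LEAST m. 0 < m \<and> \<not> has_fq_decomp Q i m)"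
    using assms less.prems hd unfolding is_fibonacci_quilt_def by simp
  also have "\<dots> = Q i"
  proof (rule Least_equality)
    have "Q 0 < Q i" using Q_mono less.prems by simp
    then show "0 < Q i \<and> \<not> has_fq_decomp Q i (Q i)"
      using B less.prems unfolding has_fq_decomp_def by (auto simp: Q_small)
  next
    fix y assume "0 < y \<and> \<not> has_fq_decomp Q i y"
    then show "Q i \<le> y" using A unfolding has_fq_decomp_def by (meson not_le)
  qed
  finally show ?case .
qed

theorem mainTheorem17:
  fixes q :: "nat \<Rightarrow> nat"
  assumes "is_fibonacci_quilt q"
  shows "(\<forall>n\<ge>7. 2 * q n = q (n + 2) + q (n - 5))
       \<and> (\<forall>n\<ge>8. q n + q (n - 2) = q (n + 1) + q (n - 5))
       \<and> (\<forall>n\<ge>10. q n + q (n - 3) = q (n + 1) + q (n - 8))"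
proof (intro conjI allI impI)
  note qQ = q_eq_Q[OF assms]
  fix n :: nat
  {
    assume n: "n \<ge> 7"
    have "Q (n+2) = Q n + Q (n-1)" using Q_rec[of "n+2"] n by simp
    moreover have "Q n = Q (n-1) + Q (n-5)" using Q_rec2 n by simp
    ultimately show "2 * q n = q (n + 2) + q (n - 5)" using n qQ by simp
  }
  {
    assume n: "n \<ge> 8"
    have "Q (n+1) = Q (n-1) + Q (n-2)" using Q_rec[of "n+1"] n by simp
    moreover have "Q n = Q (n-1) + Q (n-5)" using Q_rec2 n by simp
    ultimately show "q n + q (n - 2) = q (n + 1) + q (n - 5)" using n qQ by simp
  }
  {
    assume n: "n \<ge> 10"
    have "Q (n+1) = Q n + Q (n-4)" using Q_rec2[of "n+1"] n by simp
    moreover have "Q (n-3) = Q (n-4) + Q (n-8)" using Q_rec2[of "n-3"] n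
      by (simp add: numeral_eq_Suc)
    ultimately show "q n + q (n - 3) = q (n + 1) + q (n - 8)" using n qQ by simp
  }
qed

end
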